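(* Let $C_k=\frac{1}{k+1}\binom{2k}{k}$ and let $S_n=\sum_{k=0}^n\binom{n+k}{2k}C_k$ (the large Schroeder numbers), and let $s_n$ be the little Schroeder numbers, defined by $\sum_{n\ge0}s_nx^n=\frac{1+x-\sqrt{1-6x+x^2}}{4x}$. Then $(S_n)_{n\ge0}$ is the moment sequence of the family of orthogonal polynomials whose coefficient array is the Riordan array $\left(\frac{1}{1+2x},\frac{x}{1+3x+2x^2}\right)$, and $(s_n)_{n\ge0}$ is the moment sequence of the family of orthogonal polynomials whose coefficient array is the Riordan array $\left(\frac{1}{1+x},\frac{x}{1+3x+2x^2}\right)$.
   Context: For power series $g(x)=g_0+g_1x+\cdots$ with $g_0\neq0$ and $f(x)=f_1x+f_2x^2+\cdots$, the Riordan array $(g,f)$ is the infinite lower-triangular matrix $T$ with entries $T_{n,k}=[x^n]\,g(x)f(x)^k$, where $[x^n]$ extracts the coefficient of $x^n$. A Riordan array $T$ is the coefficient array of the family of polynomials $P_n(x)=\sum_{k=0}^nT_{n,k}x^k$ ($n\ge0$). Saying that a sequence $(\mu_n)$ is the moment sequence of this (monic) family of orthogonal polynomials means: the linear functional $L$ on polynomials with $L(x^n)=\mu_n$ satisfies $L(P_mP_n)=0$ for $m\neq n$ and $L(P_n^2)\neq0$; equivalently, $(\mu_n)$ is the first column of the inverse matrix $T^{-1}$. *)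

theory Defs
  imports "HOL-Computational_Algebra.Computational_Algebra"
begin

definition catalan :: "nat \<Rightarrow> real" where
  "catalan k = real ((2*k) choose k) / real (k + 1)"

definition large_schroeder :: "nat \<Rightarrow> real" where
  "large_schroeder n = (\<Sum>k=0..n. real ((n + k) choose (2*k)) * catalan k)"

text \<open>Little Schroeder numbers: coefficients of (1 + x - sqrt(1 - 6x + x^2)) / (4x),
  where sqrt is the power-series square root with constant term 1, and division by x
  is the shift (the numerator has constant term 0).\<close>
definition little_schroeder_gf :: "real fps" where
  "little_schroeder_gf =
     fps_const (1/4) * fps_shift 1
       (1 + fps_X - fps_radical (\<lambda>_ _. 1) 2 (1 - 6 * fps_X + fps_X ^ 2))"

definition little_schroeder :: "nat \<Rightarrow> real" where
  "little_schroeder n = little_schroeder_gf $ n"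

definition riordan :: "real fps \<Rightarrow> real fps \<Rightarrow> nat \<Rightarrow> nat \<Rightarrow> real" where
  "riordan g f n k = (g * f ^ k) $ n"

definition coeff_array_poly :: "(nat \<Rightarrow> nat \<Rightarrow> real) \<Rightarrow> nat \<Rightarrow> real poly" where
  "coeff_array_poly T n = (\<Sum>k\<le>n. monom (T n k) k)"

definition moment_functional :: "(nat \<Rightarrow> real) \<Rightarrow> real poly \<Rightarrow> real" where
  "moment_functional mu p = (\<Sum>i\<le>degree p. coeff p i * mu i)"

definition is_moment_sequence :: "(nat \<Rightarrow> real) \<Rightarrow> (nat \<Rightarrow> real poly) \<Rightarrow> bool" where
  "is_moment_sequence mu P \<longleftrightarrow>
     (\<forall>m n. m \<noteq> n \<longrightarrow> moment_functional mu (P m * P n) = 0) \<and>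
     (\<forall>n. moment_functional mu (P n * P n) \<noteq> 0)"

end

theory Submission
  imports Defs
begin

lemma catalan_Suc_nat: "(Suc (Suc (2*k)) choose Suc k) * Suc k = 2 * (2 * k + 1) * ((2*k) choose k)"
proof -
  have e1: "(Suc (Suc (2*k)) choose Suc k) * Suc k = Suc (Suc (2*k)) * (Suc (2*k) choose k)"
    using Suc_times_binomial[of k "Suc (2*k)"] by (simp only: mult.commute)
  have e2: "Suc (2*k) * ((2*k) choose k) = (Suc (2*k) choose Suc k) * Suc k"
    using Suc_times_binomial_eq[of "2*k" k] .
  have e3: "(Suc (2*k) choose Suc k) = (Suc (2*k) choose k)"
    using binomial_symmetric[of k "Suc (2*k)"] by simp
  have "(Suc (Suc (2*k)) choose Suc k) * Suc k = 2 * ((Suc (2*k) choose k) * Suc k)"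
    unfolding e1 by (simp add: algebra_simps)
  also have "\<dots> = 2 * (Suc (2*k) * ((2*k) choose k))" using e2 e3 by simp
  finally show ?thesis by simp
qed

lemma catalan_Suc: "catalan (Suc k) * (real k + 2) = 2 * (2 * real k + 1) * catalan k"
proof -
  have h: "real (Suc (Suc (2*k)) choose Suc k) * (real k + 1) = 2 * (2 * real k + 1) * real ((2*k) choose k)"
    using arg_cong[OF catalan_Suc_nat, of real] by (simp add: algebra_simps)
  have "catalan (Suc k) * (real k + 2) = real (Suc (Suc (2*k)) choose Suc k)"
    unfolding catalan_def by (simp del: binomial_Suc_Suc add: field_simps)
  also have "\<dots> = 2 * (2 * real k + 1) * real ((2*k) choose k) / (real k + 1)"
    using h by (simp add: field_simps)
  also have "\<dots> = 2 * (2 * real k + 1) * catalan k" by (simp add: catalan_def)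
  finally show ?thesis .
qed

lemma half_gchoose: "((1/2::real) gchoose Suc k) * (-4) ^ Suc k = -2 * catalan k"
proof (induction k)
  case 0 then show ?case by (simp add: catalan_def)
next
  case (Suc k)
  have a: "real (Suc (Suc k)) * ((1/2::real) gchoose Suc (Suc k)) = (1/2 - real (Suc k)) * ((1/2) gchoose (Suc k))"
    using gbinomial_absorption[of "Suc k" "1/2::real"] gbinomial_absorb_comp[of "1/2::real" "Suc k"] by simp
  have "((1/2::real) gchoose Suc (Suc k)) * (-4) ^ Suc (Suc k) * (real k + 2)
      = (-4) * (real (Suc (Suc k)) * ((1/2::real) gchoose Suc (Suc k))) * (-4) ^ Suc k"
    by (simp add: algebra_simps)
  also have "\<dots> = (-4) * ((1/2 - real (Suc k)) * ((1/2) gchoose (Suc k))) * (-4) ^ Suc k"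
    by (subst a) simp
  also have "\<dots> = (-4) * (1/2 - real (Suc k)) * (-2 * catalan k)" using Suc.IH by (simp add: algebra_simps)
  also have "\<dots> = -2 * (catalan (Suc k) * (real k + 2))" using catalan_Suc[of k] by (simp add: algebra_simps)
  finally have "(((1/2::real) gchoose Suc (Suc k)) * (-4) ^ Suc (Suc k) + 2 * catalan (Suc k)) * (real k + 2) = 0"
    by (simp add: algebra_simps)
  moreover have "real k + 2 \<noteq> 0" by simp
  ultimately have "((1/2::real) gchoose Suc (Suc k)) * (-4) ^ Suc (Suc k) + 2 * catalan (Suc k) = 0"
    by simp
  then show ?case by linarith
qed

definition Cf :: "real fps" where "Cf = Abs_fps catalan"

lemma Cf_eq: "Cf = 1 + fps_X * Cf ^ 2"
proof -
  define Q :: "real fps" where "Q = Abs_fps (\<lambda>n. ((1/2) gchoose n) * (-4)^n)"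
  have "Q * Q = 1 - 4 * fps_X"
  proof (rule fps_ext)
    fix n
    have "(Q*Q) $ n = (\<Sum>i=0..n. ((1/2::real) gchoose i) * ((1/2) gchoose (n-i)) * (-4)^n)"
      unfolding Q_def fps_mult_nth
      by (intro sum.cong refl) (simp add: power_add[symmetric])
    also have "\<dots> = (fps_binomial (1/2) * fps_binomial (1/2)) $ n * (-4)^n"
      by (simp add: fps_mult_nth sum_distrib_right)
    also have "fps_binomial (1/2) * fps_binomial (1/2) = (1 + fps_X :: real fps)"
    proof -
      have "fps_binomial (1/2) * fps_binomial (1/2) = fps_binomial (1/2 + 1/2 :: real)"
        by (rule fps_binomial_add_mult[symmetric])
      also have "\<dots> = fps_binomial 1" by simp
      also have "\<dots> = 1 + fps_X" by (rule fps_binomial_1)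
      finally show ?thesis .
    qed
    finally show "(Q*Q) $ n = (1 - 4 * fps_X) $ n"
      by (cases n) (auto simp: numeral_fps_const)
  qed
  moreover have "Q = 1 - fps_const 2 * (fps_X * Cf)"
  proof (rule fps_ext)
    fix n show "Q $ n = (1 - fps_const 2 * (fps_X * Cf)) $ n"
      using half_gchoose by (cases n) (simp_all add: Q_def Cf_def)
  qed
  ultimately have "fps_X * (fps_const 4 * (1 + fps_X * Cf ^ 2 - Cf)) = 0"
    by (simp add: algebra_simps power2_eq_square numeral_fps_const fps_const_mult[symmetric]) 
  then show ?thesis by simp
qed


lemma compose_mult_nth:
  fixes a b h :: "real fps"
  assumes b0: "b $ 0 = 0"
  shows "(h * (a oo b)) $ n = (\<Sum>k=0..n. a$k * (h * b^k) $ n)"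
proof -
  have "(h * (a oo b)) $ n = (\<Sum>i=0..n. h$i * (\<Sum>k=0..n-i. a$k * (b^k) $ (n-i)))"
    by (simp add: fps_mult_nth fps_compose_nth)
  also have "\<dots> = (\<Sum>i=0..n. h$i * (\<Sum>k=0..n. a$k * (b^k) $ (n-i)))"
  proof -
    have ext: "(\<Sum>k=0..n-i. a$k * (b^k) $ (n-i)) = (\<Sum>k=0..n. a$k * (b^k) $ (n-i))" for i
      by (rule sum.mono_neutral_left) (auto simp: startsby_zero_power_prefix[OF b0])
    show ?thesis by (simp only: ext)
  qed
  also have "\<dots> = (\<Sum>i=0..n. \<Sum>k=0..n. a$k * (h$i * (b^k) $ (n-i)))"
    by (simp add: sum_distrib_left algebra_simps)
  also have "\<dots> = (\<Sum>k=0..n. \<Sum>i=0..n. a$k * (h$i * (b^k) $ (n-i)))"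
    by (rule sum.swap)
  also have "\<dots> = (\<Sum>k=0..n. a$k * (h * b^k) $ n)"
    by (simp add: fps_mult_nth sum_distrib_left)
  finally show ?thesis .
qed

definition Ii :: "real fps" where "Ii = inverse (1 - fps_X)"

lemma Ii_nth: "Ii $ m = 1"
  unfolding Ii_def fps_inverse_one_minus_fps_X by simp

lemma Ii_mult_nth: "(Ii * a) $ m = (\<Sum>j=0..m. a $ j)"
proof -
  have "(Ii * a) $ m = (\<Sum>i=0..m. a $ (m - i))" by (simp add: fps_mult_nth Ii_nth)
  also have "\<dots> = (\<Sum>j=0..m. a $ j)"
    by (rule sum.reindex_bij_witness[of _ "\<lambda>j. m - j" "\<lambda>j. m - j"]) auto
  finally show ?thesis .
qed

lemma hockey: "(\<Sum>j=0..m. (j + r) choose r) = (m + Suc r) choose Suc r"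
  by (induction m) simp_all

lemma Ii_pow_nth: "(Ii ^ Suc r) $ m = real ((m + r) choose r)"
proof (induction r arbitrary: m)
  case 0 then show ?case by (simp add: Ii_nth)
next
  case (Suc r)
  have "(Ii ^ Suc (Suc r)) $ m = (\<Sum>j=0..m. real ((j + r) choose r))"
    by (simp only: power_Suc[of Ii "Suc r"] Ii_mult_nth Suc.IH)
  also have "\<dots> = real ((m + Suc r) choose Suc r)"
    by (simp only: of_nat_sum[symmetric] hockey)
  finally show ?case .
qed

lemma Ii_inv: "(1 - fps_X) * Ii = 1"
  unfolding Ii_def by (rule inverse_mult_eq_1') simp

definition Yy :: "real fps" where "Yy = fps_X * Ii ^ 2"
definition Sf :: "real fps" where "Sf = Abs_fps large_schroeder"

lemma Yy0: "Yy $ 0 = 0" by (simp add: Yy_def)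

lemma Sf_comp: "Sf = Ii * (Cf oo Yy)"
proof (rule fps_ext)
  fix n
  have "(Ii * (Cf oo Yy)) $ n = (\<Sum>k=0..n. catalan k * (Ii * Yy^k) $ n)"
    by (simp add: compose_mult_nth[OF Yy0] Cf_def)
  also have "\<dots> = (\<Sum>k=0..n. catalan k * real ((n + k) choose (2*k)))"
  proof (intro sum.cong refl arg_cong2[where f="(*)"])
    fix k assume k: "k \<in> {0..n}"
    have "Ii * Yy^k = fps_X ^ k * Ii ^ Suc (2*k)"
      by (simp add: Yy_def power_mult_distrib power_mult[symmetric] algebra_simps)
    then have "(Ii * Yy^k) $ n = (fps_X ^ k * Ii ^ Suc (2*k)) $ n"
      by (simp only:)
    also have "\<dots> = (Ii ^ Suc (2*k)) $ (n - k)"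
      using k by (simp add: fps_X_power_mult_nth)
    also have "\<dots> = real ((n + k) choose (2*k))"
    proof -
      have "n - k + 2*k = n + k" using k by simp
      then show ?thesis using Ii_pow_nth[of "2*k" "n-k"] by (simp only:)
    qed
    finally show "(Ii * Yy^k) $ n = real ((n + k) choose (2*k))" .
  qed
  finally show "Sf $ n = (Ii * (Cf oo Yy)) $ n"
    by (simp add: Sf_def large_schroeder_def mult.commute)
qed

lemma Sf_eq: "Sf = 1 + fps_X * Sf + fps_X * Sf ^ 2"
proof -
  define A where "A = Cf oo Yy"
  have "A = (1 + fps_X * Cf ^ 2) oo Yy" unfolding A_def using Cf_eq by simp
  also have "\<dots> = 1 + Yy * A ^ 2"
    by (simp add: A_def fps_compose_add_distrib fps_compose_mult_distrib[OF Yy0]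
        fps_compose_power[OF Yy0] fps_X_fps_compose_startby0[OF Yy0])
  finally have hA: "A = 1 + Yy * A ^ 2" .
  have "Sf * (1 - fps_X) = A" using Sf_comp Ii_inv unfolding A_def
    by (metis mult.assoc mult.commute mult_1_left)
  moreover have "fps_X * Sf ^ 2 = Yy * A ^ 2"
  proof -
    have "fps_X * Sf ^ 2 = fps_X * (Ii * A) ^ 2" using Sf_comp A_def by simp
    also have "\<dots> = Yy * A ^ 2" by (simp add: Yy_def power_mult_distrib algebra_simps)
    finally show ?thesis .
  qed
  ultimately have "Sf * (1 - fps_X) - fps_X * Sf ^ 2 = A - Yy * A ^ 2" by simp
  also have "A - Yy * A ^ 2 = (1 + Yy * A ^ 2) - Yy * A ^ 2"
    using hA by (rule arg_cong[where f="\<lambda>t. t - Yy * A ^ 2"])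
  also have "\<dots> = 1" by simp
  finally have "Sf * (1 - fps_X) - fps_X * Sf ^ 2 = 1" .
  then show ?thesis by (simp add: algebra_simps)
qed

lemma little_eq: "little_schroeder_gf = fps_const (1/2) * (1 + Sf)"
proof -
  define R where "R = 1 - fps_X - fps_const 2 * (fps_X * Sf)"
  have "R ^ 2 = 1 - 6 * fps_X + fps_X ^ 2"
  proof -
    have "R ^ 2 = (1 - fps_X)^2 - 4 * fps_X * (Sf - fps_X * Sf - fps_X * Sf^2)"
      unfolding R_def by (simp add: power2_eq_square algebra_simps numeral_fps_const fps_const_mult[symmetric])
    also have "Sf - fps_X * Sf - fps_X * Sf^2 = 1" using Sf_eq by (simp add: algebra_simps)
    finally show ?thesis by (simp add: power2_eq_square algebra_simps)
  qed
  moreover have "R $ 0 = 1" by (simp add: R_def)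
  ultimately have "R = fps_radical (\<lambda>_ _. 1) (Suc 1) (1 - 6 * fps_X + fps_X ^ 2)"
    using radical_unique[of "\<lambda>_ _. 1::real" 1 "1 - 6 * fps_X + fps_X ^ 2" R] by (simp add: power2_eq_square)
  then have hR: "fps_radical (\<lambda>_ _. 1) 2 (1 - 6 * fps_X + fps_X ^ 2) = R" by (simp only: numeral_2_eq_2 One_nat_def)
  have "1 + fps_X - R = (fps_const 2 * (1 + Sf)) * fps_X"
    unfolding R_def by (simp add: algebra_simps numeral_fps_const)
  then have "fps_shift 1 (1 + fps_X - R) = fps_const 2 * (1 + Sf)"
    by (simp only: fps_shift_times_fps_X')
  then have "little_schroeder_gf = fps_const (1/4) * (fps_const 2 * (1 + Sf))"
    unfolding little_schroeder_gf_def hR by simp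
  also have "\<dots> = (fps_const (1/4) * fps_const 2) * (1 + Sf)" by (simp only: mult.assoc)
  also have "fps_const (1/4) * fps_const 2 = (fps_const (1/2) :: real fps)" by (simp add: fps_const_mult)
  finally show ?thesis .
qed


lemma Dmult_eq: "(1 + 3 * fps_X + 2 * fps_X ^ 2 :: real fps) * h
   = h + fps_const 3 * (fps_X * h) + fps_const 2 * (fps_X ^ 2 * h)"
  by (simp add: algebra_simps numeral_fps_const)

lemma Dmult_nth0: "((1 + 3 * fps_X + 2 * fps_X ^ 2 :: real fps) * h) $ 0 = h $ 0"
  unfolding Dmult_eq by (simp add: fps_X_power_mult_nth)

lemma Dmult_nth1: "((1 + 3 * fps_X + 2 * fps_X ^ 2 :: real fps) * h) $ 1 = h $ 1 + 3 * h $ 0"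
  unfolding Dmult_eq by (simp add: fps_X_power_mult_nth)

lemma Dmult_nth2: "((1 + 3 * fps_X + 2 * fps_X ^ 2 :: real fps) * h) $ Suc (Suc n)
   = h $ Suc (Suc n) + 3 * h $ Suc n + 2 * h $ n"
  unfolding Dmult_eq by (simp add: fps_X_power_mult_nth)

lemma monom_Suc_mult: "monom (1::real) (Suc j) * p = monom 1 j * pCons 0 p"
proof -
  have "monom (1::real) (Suc j) = monom 1 j * monom 1 1" by (simp add: mult_monom)
  moreover have "monom (1::real) 1 * p = pCons 0 p"
    by (simp add: monom_Suc mult_pCons_left)
  ultimately show ?thesis by (simp add: mult.assoc)
qed

lemma L_sum_le:
  assumes "degree p \<le> N"
  shows "moment_functional m p = (\<Sum>i\<le>N. coeff p i * m i)"
  unfolding moment_functional_def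
  by (rule sum.mono_neutral_left) (use assms in \<open>auto simp: coeff_eq_0\<close>)

lemma L_add: "moment_functional m (p + q) = moment_functional m p + moment_functional m q"
proof -
  define N where "N = max (degree p) (degree q)"
  have "degree (p + q) \<le> N" unfolding N_def by (rule degree_add_le) auto
  then have "moment_functional m (p + q) = (\<Sum>i\<le>N. coeff (p + q) i * m i)" by (rule L_sum_le)
  also have "\<dots> = (\<Sum>i\<le>N. coeff p i * m i) + (\<Sum>i\<le>N. coeff q i * m i)"
    by (simp add: sum.distrib algebra_simps)
  also have "\<dots> = moment_functional m p + moment_functional m q"
    using L_sum_le[of p N m] L_sum_le[of q N m] by (simp add: N_def)
  finally show ?thesis .
qed

lemma L_smult: "moment_functional m (smult c p) = c * moment_functional m p"
proof -
  have "moment_functional m (smult c p) = (\<Sum>i\<le>degree p. coeff (smult c p) i * m i)"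
    by (rule L_sum_le) (rule degree_smult_le)
  then show ?thesis by (simp add: moment_functional_def sum_distrib_left algebra_simps)
qed

lemma L_zero: "moment_functional m 0 = 0"
  by (simp add: moment_functional_def)

lemma L_sum: "moment_functional m (\<Sum>k\<in>A. F k) = (\<Sum>k\<in>A. moment_functional m (F k))"
  by (induction A rule: infinite_finite_induct) (auto simp: L_zero L_add)


lemma generic:
  fixes g :: "real fps" and m :: "nat \<Rightarrow> real" and \<beta> :: real
  defines "D \<equiv> (1 + 3 * fps_X + 2 * fps_X ^ 2 :: real fps)"
  defines "f \<equiv> fps_X * inverse D"
  defines "T \<equiv> riordan g f"
  defines "P \<equiv> coeff_array_poly T"
  assumes hgD: "g * D = 1 + fps_const (3 - \<beta>) * fps_X"
  assumes hmu: "g * (Abs_fps m oo f) = 1"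
  shows "is_moment_sequence m P"
proof -
  have D0: "D $ 0 = 1" by (simp add: D_def)
  have DI: "D * inverse D = 1" by (rule inverse_mult_eq_1') (simp add: D0)
  have f0: "f $ 0 = 0" by (simp add: f_def)
  have Tdef: "T n k = (g * f ^ k) $ n" for n k by (simp add: T_def riordan_def)
  have T_hi: "T n k = 0" if "n < k" for n k
  proof -
    have "g * f ^ k = fps_X ^ k * (g * inverse D ^ k)"
      by (simp add: f_def power_mult_distrib algebra_simps)
    then have "T n k = (fps_X ^ k * (g * inverse D ^ k)) $ n" by (simp only: Tdef)
    then show ?thesis using that by (simp add: fps_X_power_mult_nth)
  qed
  have Df: "D * (g * f ^ Suc k) = fps_X * (g * f ^ k)" for k
  proof -
    have "D * (g * f ^ Suc k) = (D * inverse D) * fps_X * (g * f ^ k)"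
      by (simp add: f_def algebra_simps)
    then show ?thesis by (simp add: DI)
  qed
  have g0: "g $ 0 = 1"
  proof -
    have "(g * D) $ 0 = 1" by (simp add: hgD)
    then show ?thesis by (simp add: D0)
  qed
  have DgE: "D * g = 1 + fps_const (3 - \<beta>) * fps_X" using hgD by (simp only: mult.commute)
  have T00: "T 0 0 = 1" by (simp add: Tdef g0)
  have T10: "T 1 0 = - \<beta>"
  proof -
    have "(D * g) $ 1 = 3 - \<beta>" unfolding DgE by simp
    then show ?thesis unfolding D_def Dmult_nth1 using T00 by (simp add: Tdef)
  qed
  have T11: "T 1 1 = 1"
  proof -
    have "(D * (g * f ^ Suc 0)) $ 1 = 1" unfolding Df by (simp add: g0)
    then show ?thesis unfolding D_def Dmult_nth1 using T_hi[of 0 1] by (simp add: Tdef f0)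
  qed
  have T10': "T (Suc 0) 0 = - \<beta>" using T10 by simp
  have T11': "T (Suc 0) (Suc 0) = 1" using T11 by simp
  have P1c: "T 0 j = T (Suc 0) (Suc j)" for j by (cases j) (auto simp: T00 T11' T_hi)
  have Tr0: "T (Suc (Suc n)) 0 + 3 * T (Suc n) 0 + 2 * T n 0 = 0" for n
  proof -
    have "(D * g) $ Suc (Suc n) = 0" unfolding DgE by simp
    then show ?thesis unfolding D_def Dmult_nth2 by (simp add: Tdef)
  qed
  have TrS: "T (Suc (Suc n)) (Suc k) + 3 * T (Suc n) (Suc k) + 2 * T n (Suc k) = T (Suc n) k" for n k
  proof -
    have "(D * (g * f ^ Suc k)) $ Suc (Suc n) = T (Suc n) k" unfolding Df by (simp add: Tdef)
    then show ?thesis unfolding D_def Dmult_nth2 by (simp add: Tdef)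
  qed
  have coeffP: "coeff (P n) k = T n k" for n k
  proof -
    have "coeff (P n) k = (\<Sum>j\<le>n. if k = j then T n j else 0)"
      by (simp add: P_def coeff_array_poly_def coeff_sum coeff_monom)
    also have "\<dots> = T n k" using T_hi[of n k] by (auto simp: sum.delta)
    finally show ?thesis .
  qed
  have degP: "degree (P n) \<le> n" for n
    by (rule degree_le) (simp add: coeffP T_hi)
  define b where "b n = (if n = 0 then \<beta> else 3)" for n :: nat
  define lam where "lam n = (if n = 0 then 0 else (2::real))" for n :: nat
  have rec: "pCons 0 (P n) = P (Suc n) + smult (b n) (P n) + smult (lam n) (P (n - 1))" for n
  proof (rule poly_eqI)
    fix k
    show "coeff (pCons 0 (P n)) k = coeff (P (Suc n) + smult (b n) (P n) + smult (lam n) (P (n - 1))) k"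
    proof (cases n)
      case 0
      show ?thesis
      proof (cases k)
        case 0 then show ?thesis using \<open>n = 0\<close> T00 T10' by (simp add: coeffP b_def lam_def)
      next
        case (Suc j)
        have "T 0 (Suc j) = 0" by (rule T_hi) simp
        then show ?thesis using \<open>n = 0\<close> Suc P1c[of j] by (simp add: coeffP b_def lam_def)
      qed
    next
      case (Suc n')
      then show ?thesis
        using Tr0[of n'] TrS[of n' "k - 1"]
        by (cases k) (auto simp: coeffP b_def lam_def coeff_pCons algebra_simps)
    qed
  qed
  let ?L = "moment_functional m"
  have LP: "?L (P n) = (if n = 0 then 1 else 0)" for n
  proof -
    have "?L (P n) = (\<Sum>i\<le>n. coeff (P n) i * m i)" by (rule L_sum_le[OF degP])
    also have "\<dots> = (\<Sum>i=0..n. Abs_fps m $ i * (g * f ^ i) $ n)"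
      by (simp add: coeffP Tdef atMost_atLeast0 mult.commute)
    also have "\<dots> = (g * (Abs_fps m oo f)) $ n" by (rule compose_mult_nth[OF f0, symmetric])
    finally show ?thesis by (simp add: hmu)
  qed
  have Lmul: "?L (monom 1 j * pCons 0 (P n)) =
      ?L (monom 1 j * P (Suc n)) + b n * ?L (monom 1 j * P n) + lam n * ?L (monom 1 j * P (n - 1))" for j n
    by (simp add: rec distrib_left L_add L_smult)
  have K: "\<forall>n. j < n \<longrightarrow> ?L (monom 1 j * P n) = 0" for j
  proof (induction j)
    case 0 then show ?case by (simp add: LP)
  next
    case (Suc j)
    show ?case
    proof (intro allI impI)
      fix n assume n: "Suc j < n"
      have "?L (monom 1 (Suc j) * P n) = ?L (monom 1 j * pCons 0 (P n))" by (simp add: monom_Suc_mult)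
      also have "\<dots> = 0" unfolding Lmul using Suc.IH n by simp
      finally show "?L (monom 1 (Suc j) * P n) = 0" .
    qed
  qed
  have Kn: "?L (monom 1 n * P n) = 2 ^ n" for n
  proof (induction n)
    case 0 then show ?case by (simp add: LP)
  next
    case (Suc n)
    have "?L (monom 1 (Suc n) * P (Suc n)) = ?L (monom 1 n * pCons 0 (P (Suc n)))" by (simp add: monom_Suc_mult)
    also have "\<dots> = 2 * 2 ^ n" unfolding Lmul using K[of n] Suc.IH by (simp add: lam_def)
    finally show ?case by simp
  qed
  have Tnn: "T n n = 1" for n
  proof (induction n rule: nat_less_induct)
    case (1 n)
    show ?case
    proof (cases n)
      case 0 then show ?thesis by (simp add: T00)
    next
      case (Suc n')
      show ?thesis
      proof (cases n')
        case 0 then show ?thesis using Suc T11 by simp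
      next
        case (Suc n'')
        have "T (Suc (Suc n'')) (Suc (Suc n'')) = T (Suc n'') (Suc n'')"
          using TrS[of n'' "Suc n''"] T_hi[of "Suc n''" "Suc (Suc n'')"] T_hi[of n'' "Suc (Suc n'')"] by simp
        then show ?thesis using 1 Suc \<open>n = Suc n'\<close> by simp
      qed
    qed
  qed
  have prodL: "?L (P k * P n) = (\<Sum>i\<le>k. T k i * ?L (monom 1 i * P n))" for k n
  proof -
    have "P k = (\<Sum>i\<le>k. monom (T k i) i)" by (simp add: P_def coeff_array_poly_def)
    then have "P k * P n = (\<Sum>i\<le>k. monom (T k i) i * P n)" by (simp add: sum_distrib_right)
    also have "\<dots> = (\<Sum>i\<le>k. smult (T k i) (monom 1 i * P n))"
      by (intro sum.cong refl) (metis mult_smult_left smult_monom mult.right_neutral)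
    finally have "P k * P n = (\<Sum>i\<le>k. smult (T k i) (monom 1 i * P n))" .
    then show ?thesis by (simp add: L_sum L_smult)
  qed
  have orth: "?L (P k * P n) = 0" if "k < n" for k n
    unfolding prodL using K that by simp
  show ?thesis unfolding is_moment_sequence_def
  proof (intro conjI allI impI)
    fix k n :: nat assume "k \<noteq> n"
    show "?L (P k * P n) = 0"
    proof (cases "k < n")
      case True then show ?thesis by (rule orth)
    next
      case False
      then have "n < k" using \<open>k \<noteq> n\<close> by simp
      then have "?L (P n * P k) = 0" by (rule orth)
      then show ?thesis by (simp add: mult.commute)
    qed
  next
    fix n
    have "?L (P n * P n) = (\<Sum>i\<le>n. if i = n then T n i * 2 ^ n else 0)"
      unfolding prodL using K Kn by (intro sum.cong refl) auto
    also have "\<dots> = 2 ^ n" by (simp add: Tnn)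
    finally show "?L (P n * P n) \<noteq> 0" by simp
  qed
qed


lemma Sf_comp_f:
  defines "D \<equiv> (1 + 3 * fps_X + 2 * fps_X ^ 2 :: real fps)"
  defines "f \<equiv> fps_X * inverse D"
  shows "Sf oo f = 1 + 2 * fps_X"
proof -
  have D0: "D $ 0 = 1" by (simp add: D_def)
  have DI: "inverse D * D = 1" by (rule inverse_mult_eq_1) (simp add: D0)
  have f0: "f $ 0 = 0" by (simp add: f_def)
  have fD: "f * D = fps_X" by (simp add: f_def mult.assoc DI)
  define Z where "Z = Sf oo f"
  define W where "W = (1 + 2 * fps_X :: real fps)"
  have hZ: "Z = 1 + f * Z + f * Z ^ 2"
  proof -
    have "Z = (1 + fps_X * Sf + fps_X * Sf ^ 2) oo f" unfolding Z_def using Sf_eq by simp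
    also have "\<dots> = 1 + f * Z + f * Z ^ 2"
      by (simp add: Z_def fps_compose_add_distrib fps_compose_mult_distrib[OF f0]
          fps_compose_power[OF f0] fps_X_fps_compose_startby0[OF f0])
    finally show ?thesis .
  qed
  have hW: "W = 1 + f * W + f * W ^ 2"
  proof -
    have "W + W ^ 2 = 2 * D" by (simp add: W_def D_def power2_eq_square algebra_simps)
    have "f * W + f * W ^ 2 = f * (W + W ^ 2)" by (simp add: distrib_left)
    also have "\<dots> = 2 * (f * D)" unfolding \<open>W + W ^ 2 = 2 * D\<close> by (simp add: algebra_simps)
    also have "\<dots> = 2 * fps_X" by (simp add: fD)
    finally show ?thesis by (simp add: W_def)
  qed
  define K where "K = inverse D * (1 + Z + W)"
  define E where "E = Z - W"
  have "E = (1 + f * Z + f * Z ^ 2) - (1 + f * W + f * W ^ 2)" unfolding E_def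
    using arg_cong2[OF hZ hW, of "(-)"] .
  also have "\<dots> = f * Z - f * W + (f * Z ^ 2 - f * W ^ 2)" by (simp add: algebra_simps)
  also have "\<dots> = fps_X * E * K"
    by (simp add: E_def K_def f_def power2_eq_square algebra_simps)
  finally have hE: "E = fps_X * E * K" .
  have "E = 0"
  proof (rule ccontr)
    assume En: "E \<noteq> 0"
    then have Kn: "K \<noteq> 0" using hE by auto
    have "subdegree E = subdegree (fps_X * E * K)" using arg_cong[OF hE, of subdegree] .
    also have "\<dots> = 1 + subdegree E + subdegree K" using En Kn by simp
    finally show False by simp
  qed
  then show ?thesis unfolding E_def Z_def W_def by simp
qed

theorem mainTheorem1:
  shows "is_moment_sequence large_schroeder
           (coeff_array_poly (riordan (inverse (1 + 2 * fps_X))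
              (fps_X * inverse (1 + 3 * fps_X + 2 * fps_X ^ 2))))
       \<and> is_moment_sequence little_schroeder
           (coeff_array_poly (riordan (inverse (1 + fps_X))
              (fps_X * inverse (1 + 3 * fps_X + 2 * fps_X ^ 2))))"
proof
  have fact: "(1 + 3 * fps_X + 2 * fps_X ^ 2 :: real fps) = (1 + fps_X) * (1 + 2 * fps_X)"
    by (simp add: power2_eq_square algebra_simps)
  have I1: "inverse (1 + fps_X :: real fps) * (1 + fps_X) = 1" by (rule inverse_mult_eq_1) simp
  have I2: "inverse (1 + 2 * fps_X :: real fps) * (1 + 2 * fps_X) = 1" by (rule inverse_mult_eq_1) simp
  show "is_moment_sequence large_schroeder
           (coeff_array_poly (riordan (inverse (1 + 2 * fps_X))
              (fps_X * inverse (1 + 3 * fps_X + 2 * fps_X ^ 2))))"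
  proof (rule generic[where \<beta> = 2])
    have "inverse (1 + 2 * fps_X) * ((1 + fps_X) * (1 + 2 * fps_X)) = (1 + fps_X) * (inverse (1 + 2 * fps_X) * (1 + 2 * fps_X :: real fps))"
      by (simp only: mult.assoc mult.commute mult.left_commute)
    then show "inverse (1 + 2 * fps_X) * (1 + 3 * fps_X + 2 * fps_X ^ 2) = 1 + fps_const (3 - 2 :: real) * fps_X"
      unfolding fact I2 by simp
    have "Abs_fps large_schroeder = Sf" by (simp add: Sf_def)
    then show "inverse (1 + 2 * fps_X) * (Abs_fps large_schroeder oo fps_X * inverse (1 + 3 * fps_X + 2 * fps_X ^ 2)) = 1"
      using Sf_comp_f I2 by simp
  qed
  show "is_moment_sequence little_schroeder
           (coeff_array_poly (riordan (inverse (1 + fps_X))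
              (fps_X * inverse (1 + 3 * fps_X + 2 * fps_X ^ 2))))"
  proof (rule generic[where \<beta> = 1])
    have "inverse (1 + fps_X) * ((1 + fps_X) * (1 + 2 * fps_X)) = (1 + 2 * fps_X) * (inverse (1 + fps_X) * (1 + fps_X :: real fps))"
      by (simp only: mult.assoc mult.commute mult.left_commute)
    then show "inverse (1 + fps_X) * (1 + 3 * fps_X + 2 * fps_X ^ 2) = 1 + fps_const (3 - 1 :: real) * fps_X"
      unfolding fact I1 by (simp add: numeral_fps_const)
    have "Abs_fps little_schroeder = little_schroeder_gf"
      by (rule fps_ext) (simp add: little_schroeder_def)
    then have "Abs_fps little_schroeder = fps_const (1/2) * (1 + Sf)"
      by (simp add: little_eq)
    then have "Abs_fps little_schroeder oo fps_X * inverse (1 + 3 * fps_X + 2 * fps_X ^ 2)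
        = fps_const (1/2) * (1 + (1 + 2 * fps_X))"
      using Sf_comp_f by (simp add: fps_const_mult_apply_left[symmetric] fps_compose_add_distrib)
    also have "\<dots> = 1 + fps_X"
      by (simp add: algebra_simps numeral_fps_const fps_const_mult[symmetric])
    finally show "inverse (1 + fps_X) * (Abs_fps little_schroeder oo fps_X * inverse (1 + 3 * fps_X + 2 * fps_X ^ 2)) = 1"
      using I1 by simp
  qed
qed

end
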